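(* Let $n,p,r\ge 1$, let $A_0,A_1\in\mathbb{R}^{n\times n}$, $B\in\mathbb{R}^{n\times r}$, $C\in\mathbb{R}^{p\times n}$, and consider the second order linear discrete-time system $$x_{t+2}=A_0x_t+A_1x_{t+1}+Bu_t,\qquad x_0=a_0,\ x_1=a_1,\qquad y_t=Cx_t,\qquad t=0,1,2,\dots,$$ with states $x_t\in\mathbb{R}^n$, inputs $u_t\in\mathbb{R}^r$, outputs $y_t\in\mathbb{R}^p$ and unknown initial vectors $a_0,a_1\in\mathbb{R}^n$. Define matrices $S_k,P_k\in\mathbb{R}^{n\times n}$ by $S_0=A_0$, $P_0=A_1$ and, for $k\ge 1$, $S_k=P_{k-1}A_0$, $P_k=S_{k-1}+P_{k-1}A_1$. Let $\mathcal{O}(A_0,A_1,C)$ be the $(2np)\times(2n)$ block matrix whose block rows are, in order, $$\begin{bmatrix} C & 0_{p\times n}\end{bmatrix},\ \begin{bmatrix} 0_{p\times n} & C\end{bmatrix},\ \begin{bmatrix} CS_0 & CP_0\end{bmatrix},\ \begin{bmatrix} CS_1 & CP_1\end{bmatrix},\ \dots,\ \begin{bmatrix} CS_{2n-3} & CP_{2n-3}\end{bmatrix}.$$ Then the system is observable if and only if $\operatorname{rank}\mathcal{O}(A_0,A_1,C)=2n$.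
   Context: The system is called observable (at time $t=0$) if there exists some $t_1>0$ such that the initial state $(x_0,x_1)=(a_0,a_1)$ can be uniquely determined from the knowledge of $u_t$ and $y_t$ for $t=0,1,\dots,t_1$. Here $0_{\ell\times m}$ denotes the $\ell\times m$ zero matrix. *)

theory Defs
  imports "Jordan_Normal_Form.DL_Rank"
begin

fun traj :: "real mat \<Rightarrow> real mat \<Rightarrow> real mat \<Rightarrow> (nat \<Rightarrow> real vec) \<Rightarrow> real vec \<Rightarrow> real vec \<Rightarrow> nat \<Rightarrow> real vec" where
  "traj A0 A1 B u a0 a1 0 = a0"
| "traj A0 A1 B u a0 a1 (Suc 0) = a1"
| "traj A0 A1 B u a0 a1 (Suc (Suc t)) =
     A0 *\<^sub>v traj A0 A1 B u a0 a1 t + A1 *\<^sub>v traj A0 A1 B u a0 a1 (Suc t) + B *\<^sub>v u t"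

definition observable :: "nat \<Rightarrow> nat \<Rightarrow> real mat \<Rightarrow> real mat \<Rightarrow> real mat \<Rightarrow> real mat \<Rightarrow> bool" where
  "observable n r A0 A1 B C \<longleftrightarrow>
    (\<exists>t1>0. \<forall>u a0 a1 b0 b1.
       (\<forall>t. u t \<in> carrier_vec r) \<and>
       a0 \<in> carrier_vec n \<and> a1 \<in> carrier_vec n \<and> b0 \<in> carrier_vec n \<and> b1 \<in> carrier_vec n \<and>
       (\<forall>t\<le>t1. C *\<^sub>v traj A0 A1 B u a0 a1 t = C *\<^sub>v traj A0 A1 B u b0 b1 t)
       \<longrightarrow> a0 = b0 \<and> a1 = b1)"

fun SP :: "real mat \<Rightarrow> real mat \<Rightarrow> nat \<Rightarrow> real mat \<times> real mat" where
  "SP A0 A1 0 = (A0, A1)"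
| "SP A0 A1 (Suc k) = (snd (SP A0 A1 k) * A0, fst (SP A0 A1 k) + snd (SP A0 A1 k) * A1)"

definition S_mat :: "real mat \<Rightarrow> real mat \<Rightarrow> nat \<Rightarrow> real mat" where
  "S_mat A0 A1 k = fst (SP A0 A1 k)"

definition P_mat :: "real mat \<Rightarrow> real mat \<Rightarrow> nat \<Rightarrow> real mat" where
  "P_mat A0 A1 k = snd (SP A0 A1 k)"

text \<open>Left and right (p x n) halves of the k-th block row (k = 0 .. 2n-1) of the
  observability matrix: [C | 0], [0 | C], [C S_0 | C P_0], ..., [C S_(2n-3) | C P_(2n-3)].\<close>
definition obs_left :: "nat \<Rightarrow> nat \<Rightarrow> real mat \<Rightarrow> real mat \<Rightarrow> real mat \<Rightarrow> nat \<Rightarrow> real mat" where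
  "obs_left n p A0 A1 C k =
     (if k = 0 then C else if k = 1 then 0\<^sub>m p n else C * S_mat A0 A1 (k - 2))"

definition obs_right :: "nat \<Rightarrow> nat \<Rightarrow> real mat \<Rightarrow> real mat \<Rightarrow> real mat \<Rightarrow> nat \<Rightarrow> real mat" where
  "obs_right n p A0 A1 C k =
     (if k = 0 then 0\<^sub>m p n else if k = 1 then C else C * P_mat A0 A1 (k - 2))"

definition obs_matrix :: "nat \<Rightarrow> nat \<Rightarrow> real mat \<Rightarrow> real mat \<Rightarrow> real mat \<Rightarrow> real mat" where
  "obs_matrix n p A0 A1 C = mat (2 * n * p) (2 * n) (\<lambda>(i, j).
     if j < n then obs_left n p A0 A1 C (i div p) $$ (i mod p, j)
     else obs_right n p A0 A1 C (i div p) $$ (i mod p, j - n))"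

end

theory Submission
  imports Defs
begin


lemma (in vec_space) nondistinct_rank_lt:
  assumes "A \<in> carrier_mat n nc" and "\<not> distinct (cols A)"
  shows "rank A < nc"
proof -
  obtain S where "maximal S (\<lambda>T. T \<subseteq> set (cols A) \<and> lin_indpt T)"
    using maximal_exists[of "(\<lambda>T. T \<subseteq> set (cols A) \<and> lin_indpt T)" "card (set (cols A))" "{}"]
    by (meson List.finite_set card_mono empty_iff empty_subsetI finite_lin_indpt2 rev_finite_subset)
  then have "card S \<le> card (set (cols A))" by (simp add: card_mono maximal_def)
  then have "card S < nc"
    using assms(1) cols_length card_length \<open>\<not> distinct (cols A)\<close> card_distinct carrier_matD(2) nat_less_le
    by (metis dual_order.antisym dual_order.trans)
  then show ?thesis
    using rank_card_indpt[OF assms(1) \<open>maximal S (\<lambda>T. T \<subseteq> set (cols A) \<and> lin_indpt T)\<close>]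
    by simp
qed

lemma (in vec_space) rank_full_iff_ker:
  assumes A: "A \<in> carrier_mat n nc"
  shows "rank A = nc \<longleftrightarrow> (\<forall>v\<in>carrier_vec nc. A *\<^sub>v v = 0\<^sub>v n \<longrightarrow> v = 0\<^sub>v nc)"
proof
  assume r: "rank A = nc"
  show "\<forall>v\<in>carrier_vec nc. A *\<^sub>v v = 0\<^sub>v n \<longrightarrow> v = 0\<^sub>v nc"
  proof (intro ballI impI, rule ccontr)
    fix v assume v: "v \<in> carrier_vec nc" "A *\<^sub>v v = 0\<^sub>v n" "v \<noteq> 0\<^sub>v nc"
    show False
    proof (cases "distinct (cols A)")
      case True
      then have "lin_indpt (set (cols A))" using full_rank_lin_indpt r A by auto
      then show False using lin_depI[OF A v(1) v(3) v(2)] True by blast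
    next
      case False
      then show False using nondistinct_rank_lt[OF A] r by simp
    qed
  qed
next
  assume ker: "\<forall>v\<in>carrier_vec nc. A *\<^sub>v v = 0\<^sub>v n \<longrightarrow> v = 0\<^sub>v nc"
  have d: "distinct (cols A)"
  proof (rule ccontr)
    assume "\<not> distinct (cols A)"
    then obtain i j where ij: "i\<noteq>j" "(cols A) ! i = (cols A) ! j" "i<length (cols A)" "j<length (cols A)"
      using distinct_conv_nth by blast
    then have c: "col A i = col A j" "i<nc" "j<nc" using A by auto
    define v :: "'a vec" where "v = unit_vec nc i - unit_vec nc j"
    have vc: "v \<in> carrier_vec nc" unfolding v_def by simp
    have "v $ i = 1" unfolding v_def using ij c by simp
    then have "v \<noteq> 0\<^sub>v nc" using c by auto
    moreover have "A *\<^sub>v v = 0\<^sub>v n"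
    proof (rule eq_vecI)
      fix k assume "k < dim_vec (0\<^sub>v n)"
      then have k: "k < n" by simp
      have "(A *\<^sub>v v) $ k = row A k \<bullet> v" using A k by simp
      also have "\<dots> = row A k \<bullet> unit_vec nc i - row A k \<bullet> unit_vec nc j"
        unfolding v_def by (rule scalar_prod_minus_distrib[of _ nc], insert A, auto)
      also have "\<dots> = A $$ (k,i) - A $$ (k,j)" using A k c by simp
      also have "\<dots> = 0"
      proof -
        have "A $$ (k,i) = col A i $ k" "A $$ (k,j) = col A j $ k" using A k c(2,3) by auto
        then show ?thesis using c(1) by (simp del: index_col)
      qed
      finally show "(A *\<^sub>v v) $ k = 0\<^sub>v n $ k" using k by simp
    qed (insert A, auto)
    ultimately show False using ker vc by auto
  qed
  have "lin_indpt (set (cols A))"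
  proof
    assume "lin_dep (set (cols A))"
    then obtain v where "v \<in> carrier_vec nc" "v \<noteq> 0\<^sub>v nc" "A *\<^sub>v v = 0\<^sub>v n"
      using lin_depE[OF A _ d] by metis
    then show False using ker by auto
  qed
  then show "rank A = nc" using lin_indpt_full_rank[OF A d] by metis
qed

lemma wide_ker:
  fixes A :: "'a :: field mat"
  assumes A: "A \<in> carrier_mat N m" and lt: "N < m"
  shows "\<exists>v\<in>carrier_vec m. v \<noteq> 0\<^sub>v m \<and> A *\<^sub>v v = 0\<^sub>v N"
proof -
  define c where "c = (\<lambda>i. if i < N then row A i else 0\<^sub>v m)"
  define A' where "A' = mat\<^sub>r m m (\<lambda>i. if i = m - 1 then 0\<^sub>v m else c i)"
  have "det A' = 0" unfolding A'_def
    by (rule det_row_0, insert lt A, auto simp: c_def)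
  moreover have A'c: "A' \<in> carrier_mat m m" unfolding A'_def by simp
  ultimately obtain v where v: "v \<in> carrier_vec m" "v \<noteq> 0\<^sub>v m" "A' *\<^sub>v v = 0\<^sub>v m"
    using det_0_iff_vec_prod_zero_field by blast
  have "A *\<^sub>v v = 0\<^sub>v N"
  proof (rule eq_vecI)
    fix i assume "i < dim_vec (0\<^sub>v N)"
    then have i: "i < N" by simp
    have 1: "(A' *\<^sub>v v) $ i = row A' i \<bullet> v" using A'c i lt by simp
    have "i \<noteq> m - 1" using i lt by simp
    then have "row A' i = row A i" unfolding A'_def using i lt A by (simp add: c_def)
    with 1 have "(A' *\<^sub>v v) $ i = row A i \<bullet> v" by simp
    then show "(A *\<^sub>v v) $ i = 0\<^sub>v N $ i" using v(3) i A lt by simp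
  qed (insert A, auto)
  then show ?thesis using v by blast
qed



fun htraj :: "real mat \<Rightarrow> real mat \<Rightarrow> real vec \<Rightarrow> real vec \<Rightarrow> nat \<Rightarrow> real vec" where
  "htraj A0 A1 d0 d1 0 = d0"
| "htraj A0 A1 d0 d1 (Suc 0) = d1"
| "htraj A0 A1 d0 d1 (Suc (Suc t)) = A0 *\<^sub>v htraj A0 A1 d0 d1 t + A1 *\<^sub>v htraj A0 A1 d0 d1 (Suc t)"

definition Gm :: "nat \<Rightarrow> nat \<Rightarrow> real mat \<Rightarrow> real mat \<Rightarrow> real mat \<Rightarrow> nat \<Rightarrow> real mat" where
  "Gm n p A0 A1 C t = mat p (2 * n) (\<lambda>(i, j).
     if j < n then obs_left n p A0 A1 C t $$ (i, j) else obs_right n p A0 A1 C t $$ (i, j - n))"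

lemma SP_carrier:
  assumes "A0 \<in> carrier_mat n n" "A1 \<in> carrier_mat n n"
  shows "S_mat A0 A1 k \<in> carrier_mat n n \<and> P_mat A0 A1 k \<in> carrier_mat n n"
  using assms by (induction k) (auto simp: S_mat_def P_mat_def)

lemma htraj_carrier:
  assumes "A0 \<in> carrier_mat n n" "A1 \<in> carrier_mat n n" "d0 \<in> carrier_vec n" "d1 \<in> carrier_vec n"
  shows "htraj A0 A1 d0 d1 t \<in> carrier_vec n"
proof (induction t rule: less_induct)
  case (less t)
  show ?case
  proof (cases t)
    case (Suc t')
    then show ?thesis using less assms by (cases t') auto
  qed (use assms in auto)
qed

lemma htraj_shift:
  "htraj A0 A1 d0 d1 (Suc t) = htraj A0 A1 d1 (A0 *\<^sub>v d0 + A1 *\<^sub>v d1) t"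
proof (induction t rule: less_induct)
  case (less t)
  show ?case
  proof (cases t)
    case (Suc t')
    show ?thesis
    proof (cases t')
      case (Suc m)
      have "htraj A0 A1 d0 d1 (Suc t) = A0 *\<^sub>v htraj A0 A1 d0 d1 (Suc m) + A1 *\<^sub>v htraj A0 A1 d0 d1 (Suc (Suc m))"
        using \<open>t = Suc t'\<close> Suc by (simp only: htraj.simps)
      also have "\<dots> = A0 *\<^sub>v htraj A0 A1 d1 (A0 *\<^sub>v d0 + A1 *\<^sub>v d1) m + A1 *\<^sub>v htraj A0 A1 d1 (A0 *\<^sub>v d0 + A1 *\<^sub>v d1) (Suc m)"
        using less[of m] less[of "Suc m"] \<open>t = Suc t'\<close> Suc by simp
      also have "\<dots> = htraj A0 A1 d1 (A0 *\<^sub>v d0 + A1 *\<^sub>v d1) t"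
        using \<open>t = Suc t'\<close> Suc by (simp only: htraj.simps)
      finally show ?thesis .
    qed (use \<open>t = Suc t'\<close> in auto)
  qed auto
qed

lemma htraj_SP:
  assumes A0: "A0 \<in> carrier_mat n n" and A1: "A1 \<in> carrier_mat n n"
  shows "d0 \<in> carrier_vec n \<Longrightarrow> d1 \<in> carrier_vec n \<Longrightarrow>
    htraj A0 A1 d0 d1 (Suc (Suc k)) = S_mat A0 A1 k *\<^sub>v d0 + P_mat A0 A1 k *\<^sub>v d1"
proof (induction k arbitrary: d0 d1)
  case 0
  then show ?case by (simp add: S_mat_def P_mat_def)
next
  case (Suc k)
  have S: "S_mat A0 A1 k \<in> carrier_mat n n" and P: "P_mat A0 A1 k \<in> carrier_mat n n"
    using SP_carrier[OF A0 A1] by auto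
  have e: "A0 *\<^sub>v d0 + A1 *\<^sub>v d1 \<in> carrier_vec n" using Suc.prems A0 A1 by auto
  have "htraj A0 A1 d0 d1 (Suc (Suc (Suc k))) = htraj A0 A1 d1 (A0 *\<^sub>v d0 + A1 *\<^sub>v d1) (Suc (Suc k))"
    by (rule htraj_shift)
  also have "\<dots> = S_mat A0 A1 k *\<^sub>v d1 + P_mat A0 A1 k *\<^sub>v (A0 *\<^sub>v d0 + A1 *\<^sub>v d1)"
    using Suc.IH[OF Suc.prems(2) e] .
  also have "\<dots> = (P_mat A0 A1 k * A0) *\<^sub>v d0 + (S_mat A0 A1 k + P_mat A0 A1 k * A1) *\<^sub>v d1"
  proof (rule eq_vecI)
    fix i assume "i < dim_vec ((P_mat A0 A1 k * A0) *\<^sub>v d0 + (S_mat A0 A1 k + P_mat A0 A1 k * A1) *\<^sub>v d1)"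
    then have i: "i < n" using P by simp
    show "(S_mat A0 A1 k *\<^sub>v d1 + P_mat A0 A1 k *\<^sub>v (A0 *\<^sub>v d0 + A1 *\<^sub>v d1)) $ i =
        ((P_mat A0 A1 k * A0) *\<^sub>v d0 + (S_mat A0 A1 k + P_mat A0 A1 k * A1) *\<^sub>v d1) $ i"
      using S P A0 A1 Suc.prems i
      by (simp add: mult_add_distrib_mat_vec assoc_mult_mat_vec add_mult_distrib_mat_vec algebra_simps)
  qed (use S P in auto)
  finally show ?case by (simp add: S_mat_def P_mat_def)
qed

lemma obs_lr_carrier:
  assumes "A0 \<in> carrier_mat n n" "A1 \<in> carrier_mat n n" "C \<in> carrier_mat p n"
  shows "obs_left n p A0 A1 C t \<in> carrier_mat p n" "obs_right n p A0 A1 C t \<in> carrier_mat p n"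
  using assms SP_carrier[OF assms(1,2), of "t - 2"] by (auto simp: obs_left_def obs_right_def)

lemma Gm_carrier: "Gm n p A0 A1 C t \<in> carrier_mat p (2*n)"
  unfolding Gm_def by simp

lemma Gm_mult:
  assumes A0: "A0 \<in> carrier_mat n n" and A1: "A1 \<in> carrier_mat n n" and C: "C \<in> carrier_mat p n"
    and d: "d0 \<in> carrier_vec n" "d1 \<in> carrier_vec n"
  shows "Gm n p A0 A1 C t *\<^sub>v (d0 @\<^sub>v d1) = C *\<^sub>v htraj A0 A1 d0 d1 t"
proof -
  let ?L = "obs_left n p A0 A1 C t" and ?R = "obs_right n p A0 A1 C t"
  have L: "?L \<in> carrier_mat p n" and R: "?R \<in> carrier_mat p n" using obs_lr_carrier[OF A0 A1 C] by auto
  have "Gm n p A0 A1 C t = four_block_mat ?L ?R (0\<^sub>m 0 n) (0\<^sub>m 0 n)"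
    by (rule eq_matI, insert L R, auto simp: Gm_def four_block_mat_def)
  then have "Gm n p A0 A1 C t *\<^sub>v (d0 @\<^sub>v d1) = (?L *\<^sub>v d0 + ?R *\<^sub>v d1) @\<^sub>v (0\<^sub>m 0 n *\<^sub>v d0 + 0\<^sub>m 0 n *\<^sub>v d1)"
    using four_block_mat_mult_vec[OF L R zero_carrier_mat zero_carrier_mat d] by simp
  also have "\<dots> = ?L *\<^sub>v d0 + ?R *\<^sub>v d1"
    by (rule eq_vecI, insert L R, auto)
  also have "\<dots> = C *\<^sub>v htraj A0 A1 d0 d1 t"
  proof (cases t)
    have z: "0\<^sub>m p n *\<^sub>v d1 = 0\<^sub>v p" by (rule eq_vecI, insert d, auto simp: scalar_prod_def)
    case 0 then show ?thesis using C d z by (simp add: obs_left_def obs_right_def)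
  next
    case (Suc t')
    show ?thesis
    proof (cases t')
      have z: "0\<^sub>m p n *\<^sub>v d0 = 0\<^sub>v p" by (rule eq_vecI, insert d, auto simp: scalar_prod_def)
      case 0 then show ?thesis using C d Suc z by (simp add: obs_left_def obs_right_def)
    next
      case (Suc k)
      have S: "S_mat A0 A1 k \<in> carrier_mat n n" and P: "P_mat A0 A1 k \<in> carrier_mat n n"
        using SP_carrier[OF A0 A1] by auto
      have "htraj A0 A1 d0 d1 t = S_mat A0 A1 k *\<^sub>v d0 + P_mat A0 A1 k *\<^sub>v d1"
        using htraj_SP[OF A0 A1 d] Suc \<open>t = Suc t'\<close> by simp
      then show ?thesis using Suc \<open>t = Suc t'\<close> C S P d
        by (simp add: obs_left_def obs_right_def mult_add_distrib_mat_vec assoc_mult_mat_vec)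
    qed
  qed
  finally show ?thesis .
qed

lemma traj_carrier:
  assumes "A0 \<in> carrier_mat n n" "A1 \<in> carrier_mat n n" "B \<in> carrier_mat n r"
    "\<And>t. u t \<in> carrier_vec r" "a0 \<in> carrier_vec n" "a1 \<in> carrier_vec n"
  shows "traj A0 A1 B u a0 a1 t \<in> carrier_vec n"
proof (induction t rule: less_induct)
  case (less t)
  show ?case
  proof (cases t)
    case (Suc t')
    then show ?thesis using less assms by (cases t') auto
  qed (use assms in auto)
qed

lemma traj_diff:
  assumes A0: "A0 \<in> carrier_mat n n" and A1: "A1 \<in> carrier_mat n n" and B: "B \<in> carrier_mat n r"
    and u: "\<And>t. u t \<in> carrier_vec r" and a: "a0 \<in> carrier_vec n" "a1 \<in> carrier_vec n"
    and b: "b0 \<in> carrier_vec n" "b1 \<in> carrier_vec n"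
  shows "traj A0 A1 B u a0 a1 t - traj A0 A1 B u b0 b1 t = htraj A0 A1 (a0 - b0) (a1 - b1) t"
proof (induction t rule: less_induct)
  case (less t)
  show ?case
  proof (cases t)
    case (Suc t')
    show ?thesis
    proof (cases t')
      case (Suc m)
      let ?x = "traj A0 A1 B u a0 a1" and ?y = "traj A0 A1 B u b0 b1"
      have c: "?x m \<in> carrier_vec n" "?x (Suc m) \<in> carrier_vec n" "?y m \<in> carrier_vec n" "?y (Suc m) \<in> carrier_vec n"
        using traj_carrier[OF A0 A1 B u] a b by auto
      have "?x t - ?y t = (A0 *\<^sub>v ?x m + A1 *\<^sub>v ?x (Suc m) + B *\<^sub>v u m) - (A0 *\<^sub>v ?y m + A1 *\<^sub>v ?y (Suc m) + B *\<^sub>v u m)"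
        using Suc \<open>t = Suc t'\<close> by simp
      also have "\<dots> = A0 *\<^sub>v (?x m - ?y m) + A1 *\<^sub>v (?x (Suc m) - ?y (Suc m))"
      proof (rule eq_vecI)
        fix i assume "i < dim_vec (A0 *\<^sub>v (?x m - ?y m) + A1 *\<^sub>v (?x (Suc m) - ?y (Suc m)))"
        then have i: "i < n" using A0 A1 by simp
        show "((A0 *\<^sub>v ?x m + A1 *\<^sub>v ?x (Suc m) + B *\<^sub>v u m) - (A0 *\<^sub>v ?y m + A1 *\<^sub>v ?y (Suc m) + B *\<^sub>v u m)) $ i =
          (A0 *\<^sub>v (?x m - ?y m) + A1 *\<^sub>v (?x (Suc m) - ?y (Suc m))) $ i"
          using i A0 A1 B c u[of m] by (simp add: mult_minus_distrib_mat_vec)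
      qed (use A0 A1 B in auto)
      also have "\<dots> = htraj A0 A1 (a0 - b0) (a1 - b1) t"
        using less[of m] less[of "Suc m"] Suc \<open>t = Suc t'\<close> by simp
      finally show ?thesis .
    qed (use \<open>t = Suc t'\<close> in auto)
  qed auto
qed



definition shiftv :: "nat \<Rightarrow> real mat \<Rightarrow> real mat \<Rightarrow> real vec \<Rightarrow> real vec" where
  "shiftv n A0 A1 z = vec_last z n @\<^sub>v (A0 *\<^sub>v vec_first z n + A1 *\<^sub>v vec_last z n)"

lemma G_shift:
  assumes A0: "A0 \<in> carrier_mat n n" and A1: "A1 \<in> carrier_mat n n" and C: "C \<in> carrier_mat p n"
    and z: "z \<in> carrier_vec (2*n)"
  shows "Gm n p A0 A1 C (Suc t) *\<^sub>v z = Gm n p A0 A1 C t *\<^sub>v shiftv n A0 A1 z"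
    and "shiftv n A0 A1 z \<in> carrier_vec (2*n)"
proof -
  let ?f = "vec_first z n" and ?l = "vec_last z n"
  have zz: "z = ?f @\<^sub>v ?l" using z by (metis mult_2 vec_first_last_append)
  have e: "A0 *\<^sub>v ?f + A1 *\<^sub>v ?l \<in> carrier_vec n" using A0 A1 by auto
  have "Gm n p A0 A1 C (Suc t) *\<^sub>v z = C *\<^sub>v htraj A0 A1 ?f ?l (Suc t)"
    by (subst zz, rule Gm_mult[OF A0 A1 C], auto)
  also have "\<dots> = C *\<^sub>v htraj A0 A1 ?l (A0 *\<^sub>v ?f + A1 *\<^sub>v ?l) t" by (simp add: htraj_shift)
  also have "\<dots> = Gm n p A0 A1 C t *\<^sub>v shiftv n A0 A1 z"
    unfolding shiftv_def by (rule Gm_mult[OF A0 A1 C, symmetric], auto intro: e)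
  finally show "Gm n p A0 A1 C (Suc t) *\<^sub>v z = Gm n p A0 A1 C t *\<^sub>v shiftv n A0 A1 z" .
  show "shiftv n A0 A1 z \<in> carrier_vec (2*n)" unfolding shiftv_def using e by (simp add: mult_2)
qed

lemma stab:
  assumes A0: "A0 \<in> carrier_mat n n" and A1: "A1 \<in> carrier_mat n n" and C: "C \<in> carrier_mat p n"
    and z: "z \<in> carrier_vec (2*n)"
    and z0: "\<forall>t<2*n. Gm n p A0 A1 C t *\<^sub>v z = 0\<^sub>v p"
  shows "Gm n p A0 A1 C m *\<^sub>v z = 0\<^sub>v p"
proof -
  let ?G = "Gm n p A0 A1 C"
  define P where "P j \<longleftrightarrow> (\<forall>w\<in>carrier_vec (2*n). (\<forall>t<j. ?G t *\<^sub>v w = 0\<^sub>v p) \<longrightarrow> ?G j *\<^sub>v w = 0\<^sub>v p)" for j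
  have step: "P (Suc j)" if "P j" for j
    unfolding P_def
  proof (intro ballI impI)
    fix w assume w: "w \<in> carrier_vec (2*n)" and h: "\<forall>t<Suc j. ?G t *\<^sub>v w = 0\<^sub>v p"
    have sw: "shiftv n A0 A1 w \<in> carrier_vec (2*n)" using G_shift[OF A0 A1 C w] by simp
    have "\<forall>t<j. ?G t *\<^sub>v shiftv n A0 A1 w = 0\<^sub>v p"
      using h G_shift(1)[OF A0 A1 C w] by auto
    then have "?G j *\<^sub>v shiftv n A0 A1 w = 0\<^sub>v p" using that sw unfolding P_def by blast
    then show "?G (Suc j) *\<^sub>v w = 0\<^sub>v p" using G_shift(1)[OF A0 A1 C w] by simp
  qed
  show ?thesis
  proof (cases "\<exists>j\<le>2*n. P j")
    case True
    then obtain j where j: "j \<le> 2*n" "P j" by blast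
    have Pk: "P (j + k)" for k by (induction k) (use j step in auto)
    have "\<forall>t<m. ?G t *\<^sub>v z = 0\<^sub>v p \<Longrightarrow> ?G m *\<^sub>v z = 0\<^sub>v p" for m
    proof (cases "m < 2*n")
      case True then show ?thesis using z0 by auto
    next
      case False
      assume h: "\<forall>t<m. ?G t *\<^sub>v z = 0\<^sub>v p"
      have "P m" using Pk[of "m - j"] False j(1) by simp
      then show ?thesis using h z unfolding P_def by blast
    qed
    then show ?thesis by (induction m rule: less_induct) auto
  next
    case False
    then have "\<forall>j. \<exists>w. j \<le> 2*n \<longrightarrow> w \<in> carrier_vec (2*n) \<and> (\<forall>t<j. ?G t *\<^sub>v w = 0\<^sub>v p) \<and> ?G j *\<^sub>v w \<noteq> 0\<^sub>v p"
      unfolding P_def by blast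
    then obtain W where W: "\<And>j. j \<le> 2*n \<Longrightarrow> W j \<in> carrier_vec (2*n) \<and> (\<forall>t<j. ?G t *\<^sub>v W j = 0\<^sub>v p) \<and> ?G j *\<^sub>v W j \<noteq> 0\<^sub>v p"
      by metis
    define Z where "Z = mat_of_cols (2*n) (map W [0..<Suc (2*n)])"
    have Zc: "Z \<in> carrier_mat (2*n) (Suc (2*n))" unfolding Z_def using mat_of_cols_carrier(1)[of "2*n" "map W [0..<Suc (2*n)]"] by (simp del: upt_Suc)
    have colZ: "col Z k = W k" if "k \<le> 2*n" for k
      unfolding Z_def using that W[OF that] by (subst col_mat_of_cols) (auto simp del: upt_Suc)
    obtain c where c: "c \<in> carrier_vec (Suc (2*n))" "c \<noteq> 0\<^sub>v (Suc (2*n))" "Z *\<^sub>v c = 0\<^sub>v (2*n)"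
      using wide_ker[OF Zc] by auto
    have "c $ j = 0" if "j \<le> 2*n" for j
      using that
    proof (induction j rule: less_induct)
      case (less j)
      have Gj: "?G j \<in> carrier_mat p (2*n)" by (rule Gm_carrier)
      have Wj: "W j \<in> carrier_vec (2*n)" "?G j *\<^sub>v W j \<noteq> 0\<^sub>v p" using W[OF less.prems] by auto
      then obtain i where i: "i < p" "(?G j *\<^sub>v W j) $ i \<noteq> 0"
        using Gj by (metis carrier_matD(1) dim_mult_mat_vec eq_vecI index_zero_vec(1) index_zero_vec(2))
      define M where "M = ?G j * Z"
      have Mc: "M \<in> carrier_mat p (Suc (2*n))" unfolding M_def using Gj Zc by simp
      have "0 = (?G j *\<^sub>v (Z *\<^sub>v c)) $ i" using c(3) Gj i by simp
      also have "\<dots> = (M *\<^sub>v c) $ i" unfolding M_def by (simp only: assoc_mult_mat_vec[OF Gj Zc c(1)])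
      also have "\<dots> = (\<Sum>k\<in>{0..<Suc (2*n)}. M $$ (i,k) * c $ k)"
        using Mc c(1) i by (simp add: scalar_prod_def)
      finally have "0 = (\<Sum>k\<in>{0..<Suc (2*n)}. M $$ (i,k) * c $ k)" .
      then have "0 = (\<Sum>k\<in>{0..<Suc (2*n)}. (?G j * Z) $$ (i,k) * c $ k)" unfolding M_def .
      also have "\<dots> = (?G j * Z) $$ (i,j) * c $ j + (\<Sum>k\<in>{0..<Suc (2*n)} - {j}. (?G j * Z) $$ (i,k) * c $ k)"
        by (rule sum.remove, insert less.prems, auto)
      also have "(\<Sum>k\<in>{0..<Suc (2*n)} - {j}. (?G j * Z) $$ (i,k) * c $ k) = 0"
      proof (rule sum.neutral, rule ballI)
        fix k assume k: "k \<in> {0..<Suc (2*n)} - {j}"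
        show "(?G j * Z) $$ (i,k) * c $ k = 0"
        proof (cases "k < j")
          case True then show ?thesis using less.IH[of k] less.prems by simp
        next
          case False
          then have "j < k" "k \<le> 2*n" using k by auto
          then have "?G j *\<^sub>v W k = 0\<^sub>v p" using W[of k] by auto
          moreover have "(?G j * Z) $$ (i,k) = (?G j *\<^sub>v W k) $ i"
            using Gj Zc i \<open>k \<le> 2*n\<close> colZ[of k] by simp
          ultimately show ?thesis using i by simp
        qed
      qed
      also have "(?G j * Z) $$ (i,j) = (?G j *\<^sub>v W j) $ i"
        using Gj Zc i less.prems colZ[of j] by simp
      finally show ?case using i by simp
    qed
    then have "c = 0\<^sub>v (Suc (2*n))" using c(1) by (intro eq_vecI) auto
    with c(2) show ?thesis by simp
  qed
qed



lemma vec_minus_zero_iff: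
  fixes a b :: "'a :: ab_group_add vec"
  assumes "a \<in> carrier_vec m" "b \<in> carrier_vec m"
  shows "(a - b = 0\<^sub>v m) = (a = b)"
  using assms by (auto simp: vec_eq_iff)

lemma vec_first_append': "v \<in> carrier_vec n \<Longrightarrow> vec_first (v @\<^sub>v w) n = v"
  by (rule eq_vecI) (auto simp: vec_first_def)

lemma vec_last_append': "v \<in> carrier_vec n \<Longrightarrow> w \<in> carrier_vec m \<Longrightarrow> vec_last (v @\<^sub>v w) m = w"
  by (rule eq_vecI) (auto simp: vec_last_def)

lemma zero_append': "0\<^sub>v n @\<^sub>v 0\<^sub>v m = (0\<^sub>v (n+m) :: 'a :: zero vec)"
  by (rule eq_vecI) auto

lemma out_eq:
  assumes A0: "A0 \<in> carrier_mat n n" and A1: "A1 \<in> carrier_mat n n" and B: "B \<in> carrier_mat n r"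
    and C: "C \<in> carrier_mat p n"
    and u: "\<And>t. u t \<in> carrier_vec r" and a: "a0 \<in> carrier_vec n" "a1 \<in> carrier_vec n"
    and b: "b0 \<in> carrier_vec n" "b1 \<in> carrier_vec n"
  shows "(C *\<^sub>v traj A0 A1 B u a0 a1 t = C *\<^sub>v traj A0 A1 B u b0 b1 t) \<longleftrightarrow>
         C *\<^sub>v htraj A0 A1 (a0 - b0) (a1 - b1) t = 0\<^sub>v p"
proof -
  have x: "traj A0 A1 B u a0 a1 t \<in> carrier_vec n" and y: "traj A0 A1 B u b0 b1 t \<in> carrier_vec n"
    using traj_carrier[OF A0 A1 B u] a b by auto
  have "C *\<^sub>v htraj A0 A1 (a0 - b0) (a1 - b1) t = C *\<^sub>v traj A0 A1 B u a0 a1 t - C *\<^sub>v traj A0 A1 B u b0 b1 t"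
    using traj_diff[OF A0 A1 B u a b, where t=t, symmetric] mult_minus_distrib_mat_vec[OF C x y] by simp
  then show ?thesis using vec_minus_zero_iff[of "C *\<^sub>v traj A0 A1 B u a0 a1 t" p "C *\<^sub>v traj A0 A1 B u b0 b1 t"] C x y
    by auto
qed

lemma obs_carrier: "obs_matrix n p A0 A1 C \<in> carrier_mat (2*n*p) (2*n)"
  unfolding obs_matrix_def by simp

lemma obs_ker:
  assumes p: "p \<ge> 1" and z: "z \<in> carrier_vec (2*n)"
  shows "obs_matrix n p A0 A1 C *\<^sub>v z = 0\<^sub>v (2*n*p) \<longleftrightarrow> (\<forall>t<2*n. Gm n p A0 A1 C t *\<^sub>v z = 0\<^sub>v p)"
proof -
  have idx: "(obs_matrix n p A0 A1 C *\<^sub>v z) $ i = (Gm n p A0 A1 C (i div p) *\<^sub>v z) $ (i mod p)"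
    if i: "i < 2*n*p" for i
  proof -
    have im: "i mod p < p" using p by simp
    have "row (obs_matrix n p A0 A1 C) i = row (Gm n p A0 A1 C (i div p)) (i mod p)"
      by (rule eq_vecI, insert i im, auto simp: obs_matrix_def Gm_def)
    then show ?thesis using i im by (simp add: obs_matrix_def Gm_def)
  qed
  show ?thesis
  proof
    assume h: "obs_matrix n p A0 A1 C *\<^sub>v z = 0\<^sub>v (2*n*p)"
    show "\<forall>t<2*n. Gm n p A0 A1 C t *\<^sub>v z = 0\<^sub>v p"
    proof (intro allI impI)
      fix t assume t: "t < 2*n"
      show "Gm n p A0 A1 C t *\<^sub>v z = 0\<^sub>v p"
      proof (rule eq_vecI)
        fix k assume "k < dim_vec (0\<^sub>v p)"
        then have k: "k < p" by simp
        have lt: "t * p + k < 2*n*p"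
        proof -
          have "t * p + k < t * p + p" using k by simp
          also have "\<dots> = (t+1) * p" by simp
          also have "\<dots> \<le> 2*n*p" using t by (intro mult_right_mono) auto
          finally show ?thesis .
        qed
        have "(t * p + k) div p = t" "(t * p + k) mod p = k" using k by auto
        then have "(Gm n p A0 A1 C t *\<^sub>v z) $ k = (obs_matrix n p A0 A1 C *\<^sub>v z) $ (t*p+k)"
          using idx[OF lt] by simp
        then show "(Gm n p A0 A1 C t *\<^sub>v z) $ k = 0\<^sub>v p $ k" using h lt k by simp
      qed (simp add: Gm_def)
    qed
  next
    assume h: "\<forall>t<2*n. Gm n p A0 A1 C t *\<^sub>v z = 0\<^sub>v p"
    show "obs_matrix n p A0 A1 C *\<^sub>v z = 0\<^sub>v (2*n*p)"
    proof (rule eq_vecI)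
      fix i assume "i < dim_vec (0\<^sub>v (2*n*p))"
      then have i: "i < 2*n*p" by simp
      have "i div p < 2*n" using i p by (simp add: less_mult_imp_div_less)
      then show "(obs_matrix n p A0 A1 C *\<^sub>v z) $ i = 0\<^sub>v (2*n*p) $ i"
        using idx[OF i] h i p by simp
    qed (simp add: obs_matrix_def)
  qed
qed

theorem theorem2p1:
  fixes n p r :: nat and A0 A1 B C :: "real mat"
  assumes "n \<ge> 1" and "p \<ge> 1" and "r \<ge> 1"
    and "A0 \<in> carrier_mat n n" and "A1 \<in> carrier_mat n n"
    and "B \<in> carrier_mat n r" and "C \<in> carrier_mat p n"
  shows "observable n r A0 A1 B C \<longleftrightarrow>
         vec_space.rank (2 * n * p) (obs_matrix n p A0 A1 C :: real mat) = 2 * n"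
proof -
  note A0 = assms(4) and A1 = assms(5) and B = assms(6) and C = assms(7)
  let ?G = "Gm n p A0 A1 C"
  have rk: "vec_space.rank (2 * n * p) (obs_matrix n p A0 A1 C :: real mat) = 2 * n \<longleftrightarrow>
     (\<forall>z\<in>carrier_vec (2*n). (\<forall>t<2*n. ?G t *\<^sub>v z = 0\<^sub>v p) \<longrightarrow> z = 0\<^sub>v (2*n))"
    using vec_space.rank_full_iff_ker[OF obs_carrier, of n p A0 A1 C] obs_ker[OF assms(2)] by auto
  have "observable n r A0 A1 B C \<longleftrightarrow>
     (\<forall>z\<in>carrier_vec (2*n). (\<forall>t<2*n. ?G t *\<^sub>v z = 0\<^sub>v p) \<longrightarrow> z = 0\<^sub>v (2*n))"
  proof
    assume "observable n r A0 A1 B C"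
    then obtain t1 where obs: "\<forall>u a0 a1 b0 b1.
       (\<forall>t. u t \<in> carrier_vec r) \<and>
       a0 \<in> carrier_vec n \<and> a1 \<in> carrier_vec n \<and> b0 \<in> carrier_vec n \<and> b1 \<in> carrier_vec n \<and>
       (\<forall>t\<le>t1. C *\<^sub>v traj A0 A1 B u a0 a1 t = C *\<^sub>v traj A0 A1 B u b0 b1 t)
       \<longrightarrow> a0 = b0 \<and> a1 = b1" unfolding observable_def by blast
    show "\<forall>z\<in>carrier_vec (2*n). (\<forall>t<2*n. ?G t *\<^sub>v z = 0\<^sub>v p) \<longrightarrow> z = 0\<^sub>v (2*n)"
    proof (intro ballI impI)
      fix z :: "real vec" assume z: "z \<in> carrier_vec (2*n)" and h: "\<forall>t<2*n. ?G t *\<^sub>v z = 0\<^sub>v p"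
      let ?f = "vec_first z n" and ?l = "vec_last z n"
      have zz: "z = ?f @\<^sub>v ?l" using z by (metis mult_2 vec_first_last_append)
      let ?u = "\<lambda>_::nat. 0\<^sub>v r :: real vec"
      have u: "\<And>t. ?u t \<in> carrier_vec r" by simp
      have "C *\<^sub>v traj A0 A1 B ?u ?f ?l t = C *\<^sub>v traj A0 A1 B ?u (0\<^sub>v n) (0\<^sub>v n) t" for t
      proof -
        have "?G t *\<^sub>v z = 0\<^sub>v p" using stab[OF A0 A1 C z h] .
        then have "C *\<^sub>v htraj A0 A1 ?f ?l t = 0\<^sub>v p"
          using Gm_mult[OF A0 A1 C, of ?f ?l t] zz by simp
        moreover have "?f - 0\<^sub>v n = ?f" "?l - 0\<^sub>v n = ?l" by auto
        ultimately show ?thesis using out_eq[OF A0 A1 B C u, of ?f ?l "0\<^sub>v n" "0\<^sub>v n" t] by simp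
      qed
      then have "?f = 0\<^sub>v n \<and> ?l = 0\<^sub>v n" using obs[rule_format, of ?u ?f ?l "0\<^sub>v n" "0\<^sub>v n"] by simp
      then show "z = 0\<^sub>v (2*n)" using zz zero_append'[of n n] by (simp add: mult_2)
    qed
  next
    assume KT: "\<forall>z\<in>carrier_vec (2*n). (\<forall>t<2*n. ?G t *\<^sub>v z = 0\<^sub>v p) \<longrightarrow> z = 0\<^sub>v (2*n)"
    show "observable n r A0 A1 B C" unfolding observable_def
    proof (rule exI[of _ "2*n - 1"], intro conjI allI impI)
      show "2*n - 1 > 0" using assms(1) by simp
      fix u a0 a1 b0 b1
      assume H: "(\<forall>t. u t \<in> carrier_vec r) \<and>
       a0 \<in> carrier_vec n \<and> a1 \<in> carrier_vec n \<and> b0 \<in> carrier_vec n \<and> b1 \<in> carrier_vec n \<and>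
       (\<forall>t\<le>2*n - 1. C *\<^sub>v traj A0 A1 B u a0 a1 t = C *\<^sub>v traj A0 A1 B u b0 b1 t)"
      then have u: "\<And>t. u t \<in> carrier_vec r" and a: "a0 \<in> carrier_vec n" "a1 \<in> carrier_vec n"
        and b: "b0 \<in> carrier_vec n" "b1 \<in> carrier_vec n" by auto
      define z where "z = (a0 - b0) @\<^sub>v (a1 - b1)"
      have d: "a0 - b0 \<in> carrier_vec n" "a1 - b1 \<in> carrier_vec n" using a b by auto
      have zc: "z \<in> carrier_vec (2*n)" unfolding z_def using d by (simp add: mult_2)
      have "\<forall>t<2*n. ?G t *\<^sub>v z = 0\<^sub>v p"
      proof (intro allI impI)
        fix t assume "t < 2*n"
        then have "C *\<^sub>v traj A0 A1 B u a0 a1 t = C *\<^sub>v traj A0 A1 B u b0 b1 t" using H by auto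
        then have "C *\<^sub>v htraj A0 A1 (a0 - b0) (a1 - b1) t = 0\<^sub>v p"
          using out_eq[OF A0 A1 B C u a b] by simp
        then show "?G t *\<^sub>v z = 0\<^sub>v p" unfolding z_def using Gm_mult[OF A0 A1 C d] by simp
      qed
      then have "z = 0\<^sub>v (2*n)" using KT zc by blast
      then have "z = 0\<^sub>v n @\<^sub>v 0\<^sub>v n" by (simp add: mult_2 zero_append')
      note Z0 = this
      have "a0 - b0 = vec_first z n" unfolding z_def by (rule vec_first_append'[OF d(1), symmetric])
      also have "\<dots> = 0\<^sub>v n" unfolding Z0 by (rule vec_first_append', simp)
      finally have e1: "a0 - b0 = 0\<^sub>v n" .
      have "a1 - b1 = vec_last z n" unfolding z_def by (rule vec_last_append'[OF d, symmetric])
      also have "\<dots> = 0\<^sub>v n" unfolding Z0 by (rule vec_last_append'[of _ n], auto)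
      finally have e2: "a1 - b1 = 0\<^sub>v n" .
      from e1 e2 have "a0 - b0 = 0\<^sub>v n" "a1 - b1 = 0\<^sub>v n" by auto
      then show "a0 = b0" "a1 = b1" using vec_minus_zero_iff a b by auto
    qed
  qed
  then show ?thesis using rk by simp
qed


end
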